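(* Let $\mathbf{X}$ be $(\epsilon,\delta)$-kernel learnable from $\mathbf{Z}$ using $T(\epsilon,\delta)$ samples, and suppose that $0<d_{TV}(\mathbf{X},\mathbf{X}')=\kappa<1$. If $T_0>\max\{T(\epsilon,\delta),C\cdot\frac{\log(1/\delta)}{\epsilon^2}\}$ (for a suitable absolute constant $C$), then $\mathbf{X}'$ is $(2\epsilon+2\kappa,2\delta)$-kernel learnable from $T_0$ samples using $\mathbf{Z}$.
   Context: Let $\mathbf{Y},\mathbf{Z}$ be distributions supported on $\mathbb{Z}$. $\mathbf{Y}$ is $(\epsilon,\delta)$-kernel learnable from $T$ samples using $\mathbf{Z}$ if the following holds: for every $T_1\ge T$, if $\hat Y=\{y_1,\dots,y_{T_1}\}$ is a multiset of $T_1$ i.i.d. samples from $\mathbf{Y}$ and $\mathbf{U}_{\hat Y}$ is the uniform distribution over $\hat Y$, then with probability $1-\delta$ over $\hat Y$ we have $d_{TV}(\mathbf{U}_{\hat Y}+\mathbf{Z},\mathbf{Y})\le\epsilon$ (here $+$ denotes the sum of independent random variables). $d_{TV}$ is total variation distance. *)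

theory Defs
  imports "HOL-Probability.Probability"
begin

definition d_TV :: "'a pmf \<Rightarrow> 'a pmf \<Rightarrow> real" where
  "d_TV p q = (SUP A. \<bar>measure_pmf.prob p A - measure_pmf.prob q A\<bar>)"

definition add_pmf :: "int pmf \<Rightarrow> int pmf \<Rightarrow> int pmf" where
  "add_pmf p q = map_pmf (\<lambda>(a, b). a + b) (pair_pmf p q)"

text \<open>Y is (eps,delta)-kernel learnable from T samples using Z: for every T1 \<ge> T
  (with T1 \<ge> 1 so that the sample multiset is nonempty), with probability at least
  1 - delta over T1 i.i.d. samples ys from Y, the uniform distribution on the
  multiset of samples plus an independent Z is eps-close to Y in TV distance.\<close>
definition kernel_learnable :: "int pmf \<Rightarrow> int pmf \<Rightarrow> real \<Rightarrow> real \<Rightarrow> nat \<Rightarrow> bool" where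
  "kernel_learnable Y Z eps delta T \<longleftrightarrow>
     (\<forall>T1. T1 \<ge> T \<and> T1 \<ge> 1 \<longrightarrow>
        measure_pmf.prob (replicate_pmf T1 Y)
          {ys. d_TV (add_pmf (pmf_of_multiset (mset ys)) Z) Y \<le> eps} \<ge> 1 - delta)"

end

theory Submission
  imports Defs
begin


lemma dtv_bdd: "bdd_above (range (\<lambda>A. \<bar>measure_pmf.prob p A - measure_pmf.prob q A\<bar>))"
proof (rule bdd_aboveI[where M=1])
  fix x assume "x \<in> range (\<lambda>A. \<bar>measure_pmf.prob p A - measure_pmf.prob q A\<bar>)"
  then obtain A where "x = \<bar>measure_pmf.prob p A - measure_pmf.prob q A\<bar>" by auto
  moreover have "measure_pmf.prob p A \<le> 1" "measure_pmf.prob q A \<le> 1"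
     "measure_pmf.prob p A \<ge> 0" "measure_pmf.prob q A \<ge> 0" by auto
  ultimately show "x \<le> 1" by linarith
qed

lemma dtv_ge: "\<bar>measure_pmf.prob p A - measure_pmf.prob q A\<bar> \<le> d_TV p q"
  unfolding d_TV_def by (rule cSUP_upper[OF _ dtv_bdd]) auto

lemma dtv_le: "(\<And>A. \<bar>measure_pmf.prob p A - measure_pmf.prob q A\<bar> \<le> c) \<Longrightarrow> d_TV p q \<le> c"
  unfolding d_TV_def by (rule cSUP_least) auto

lemma dtv_nonneg: "0 \<le> d_TV p q"
  using dtv_ge[of p "{}" q] by simp

lemma dtv_sym: "d_TV p q = d_TV q p"
  unfolding d_TV_def by (simp add: abs_minus_commute)

lemma dtv_tri: "d_TV p r \<le> d_TV p q + d_TV q r"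
proof (rule dtv_le)
  fix A
  have "\<bar>measure_pmf.prob p A - measure_pmf.prob r A\<bar> \<le> \<bar>measure_pmf.prob p A - measure_pmf.prob q A\<bar> + \<bar>measure_pmf.prob q A - measure_pmf.prob r A\<bar>"
    by linarith
  also have "\<dots> \<le> d_TV p q + d_TV q r" by (intro add_mono dtv_ge)
  finally show "\<bar>measure_pmf.prob p A - measure_pmf.prob r A\<bar> \<le> d_TV p q + d_TV q r" .
qed

lemma dtv_coupling:
  assumes "map_pmf fst J = p" "map_pmf snd J = q"
  shows "d_TV p q \<le> measure_pmf.prob J {z. fst z \<noteq> snd z}"
proof (rule dtv_le)
  fix A
  let ?D = "{z. fst z \<noteq> snd z}"
  have pA: "measure_pmf.prob p A = measure_pmf.prob J (fst -` A)"
    using assms(1) measure_map_pmf by metis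
  have qA: "measure_pmf.prob q A = measure_pmf.prob J (snd -` A)"
    using assms(2) measure_map_pmf by metis
  have 1: "measure_pmf.prob J (fst -` A) \<le> measure_pmf.prob J (snd -` A) + measure_pmf.prob J ?D"
  proof -
    have "measure_pmf.prob J (fst -` A) \<le> measure_pmf.prob J (snd -` A \<union> ?D)"
      by (rule measure_pmf.finite_measure_mono) auto
    also have "\<dots> \<le> measure_pmf.prob J (snd -` A) + measure_pmf.prob J ?D"
      by (rule measure_Un_le) auto
    finally show ?thesis .
  qed
  have 2: "measure_pmf.prob J (snd -` A) \<le> measure_pmf.prob J (fst -` A) + measure_pmf.prob J ?D"
  proof -
    have "measure_pmf.prob J (snd -` A) \<le> measure_pmf.prob J (fst -` A \<union> ?D)"
      by (rule measure_pmf.finite_measure_mono) auto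
    also have "\<dots> \<le> measure_pmf.prob J (fst -` A) + measure_pmf.prob J ?D"
      by (rule measure_Un_le) auto
    finally show ?thesis .
  qed
  show "\<bar>measure_pmf.prob p A - measure_pmf.prob q A\<bar> \<le> measure_pmf.prob J ?D"
    unfolding pA qA using 1 2 by linarith
qed

lemma embed_norm:
  fixes f :: "'a \<Rightarrow> real"
  assumes nn: "\<And>x. f x \<ge> 0" and I: "(\<integral>\<^sup>+x. ennreal (f x) \<partial>count_space UNIV) = ennreal c" and c: "c > 0"
  shows "pmf (embed_pmf (\<lambda>x. f x / c)) x = f x / c"
proof (rule pmf_embed_pmf)
  show "\<And>x. 0 \<le> f x / c" using nn c by auto
  have "(\<integral>\<^sup>+x. ennreal (f x / c) \<partial>count_space UNIV) = (\<integral>\<^sup>+x. ennreal (f x) * ennreal (1/c) \<partial>count_space UNIV)"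
    using nn c by (intro nn_integral_cong) (simp add: ennreal_mult[symmetric])
  also have "\<dots> = ennreal c * ennreal (1/c)"
    by (subst nn_integral_multc) (auto simp: I)
  also have "\<dots> = 1" using c by (simp add: ennreal_mult[symmetric])
  finally show "(\<integral>\<^sup>+x. ennreal (f x / c) \<partial>count_space UNIV) = 1" .
qed

lemma coupling_exists:
  fixes p q :: "'a pmf"
  shows "\<exists>J. map_pmf fst J = p \<and> map_pmf snd J = q \<and> measure_pmf.prob J {z. fst z \<noteq> snd z} \<le> d_TV p q"
proof -
  define m where "m x = min (pmf p x) (pmf q x)" for x
  define g where "g x = pmf q x - m x" for x
  define h where "h x = pmf p x - m x" for x
  have m0: "m x \<ge> 0" for x by (simp add: m_def)
  have g0: "g x \<ge> 0" for x by (simp add: g_def m_def)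
  have h0: "h x \<ge> 0" for x by (simp add: h_def m_def)
  define S where "S = (\<integral>\<^sup>+x. ennreal (m x) \<partial>count_space UNIV)"
  define G where "G = (\<integral>\<^sup>+x. ennreal (g x) \<partial>count_space UNIV)"
  define H where "H = (\<integral>\<^sup>+x. ennreal (h x) \<partial>count_space UNIV)"
  have eq1: "G + S = 1"
  proof -
    have "(1::ennreal) = (\<integral>\<^sup>+x. ennreal (pmf q x) \<partial>count_space UNIV)"
      by (simp add: nn_integral_pmf)
    also have "\<dots> = (\<integral>\<^sup>+x. ennreal (g x) + ennreal (m x) \<partial>count_space UNIV)"
      by (intro nn_integral_cong) (metis ennreal_plus[OF g0 m0] g_def diff_add_cancel)
    also have "\<dots> = G + S" unfolding G_def S_def by (rule nn_integral_add) auto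
    finally show ?thesis by simp
  qed
  have eq2: "H + S = 1"
  proof -
    have "(1::ennreal) = (\<integral>\<^sup>+x. ennreal (pmf p x) \<partial>count_space UNIV)"
      by (simp add: nn_integral_pmf)
    also have "\<dots> = (\<integral>\<^sup>+x. ennreal (h x) + ennreal (m x) \<partial>count_space UNIV)"
      by (intro nn_integral_cong) (metis ennreal_plus[OF h0 m0] h_def diff_add_cancel)
    also have "\<dots> = H + S" unfolding H_def S_def by (rule nn_integral_add) auto
    finally show ?thesis by simp
  qed
  have "S \<le> 1" using eq1 by (metis add.commute le_iff_add)
  then have Sfin: "S \<noteq> \<top>" by (metis ennreal_one_neq_top neq_top_trans)
  define s where "s = enn2real S"
  have Ss: "S = ennreal s" using Sfin unfolding s_def by (simp add: ennreal_enn2real_if)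
  have s0: "s \<ge> 0" by (simp add: s_def)
  have s1: "s \<le> 1" using \<open>S \<le> 1\<close> Ss by (simp add: ennreal_le_1)
  define k where "k = 1 - s"
  have Gk: "G = ennreal k"
  proof -
    have "G + ennreal s = ennreal k + ennreal s" using eq1 Ss s0 s1
      by (simp add: k_def ennreal_plus[symmetric] del: ennreal_plus)
    then show ?thesis using ennreal_add_left_cancel[of "ennreal s"] by (simp only: add.commute) simp
  qed
  have Hk: "H = ennreal k"
  proof -
    have "H + ennreal s = ennreal k + ennreal s" using eq2 Ss s0 s1
      by (simp add: k_def ennreal_plus[symmetric] del: ennreal_plus)
    then show ?thesis using ennreal_add_left_cancel[of "ennreal s"] by (simp only: add.commute) simp
  qed
  have kd: "k \<le> d_TV p q"
  proof -
    define A where "A = {x. pmf p x > pmf q x}"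
    have hA: "h x = (pmf p x - pmf q x) * indicator A x" for x
      by (auto simp: h_def m_def A_def indicator_def)
    have "emeasure (measure_pmf p) A = (\<integral>\<^sup>+x. ennreal (pmf p x) * indicator A x \<partial>count_space UNIV)"
      by (simp add: nn_integral_pmf[symmetric] nn_integral_count_space_indicator)
    also have "\<dots> = (\<integral>\<^sup>+x. ennreal (h x) + ennreal (pmf q x) * indicator A x \<partial>count_space UNIV)"
      by (intro nn_integral_cong) (auto simp: hA indicator_def A_def ennreal_plus[symmetric] simp del: ennreal_plus)
    also have "\<dots> = H + (\<integral>\<^sup>+x. ennreal (pmf q x) * indicator A x \<partial>count_space UNIV)"
      unfolding H_def by (rule nn_integral_add) auto
    also have "(\<integral>\<^sup>+x. ennreal (pmf q x) * indicator A x \<partial>count_space UNIV) = emeasure (measure_pmf q) A"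
      by (simp add: nn_integral_pmf[symmetric] nn_integral_count_space_indicator)
    finally have "ennreal (measure_pmf.prob p A) = ennreal k + ennreal (measure_pmf.prob q A)"
      by (simp add: Hk measure_pmf.emeasure_eq_measure)
    then have "measure_pmf.prob p A = k + measure_pmf.prob q A"
      using s1 by (simp add: k_def ennreal_plus[symmetric] del: ennreal_plus)
    then show ?thesis using dtv_ge[of p A q] by linarith
  qed
  consider "k = 0" | "s = 0" | "0 < s" "0 < k" using s0 s1 k_def by linarith
  then show ?thesis
  proof cases
    case 1
    have "G = 0" using Gk 1 by simp
    then have "AE x in count_space UNIV. ennreal (g x) = 0" unfolding G_def
      by (subst (asm) nn_integral_0_iff_AE) auto
    then have gz: "g x = 0" for x using g0[of x] by (auto simp: AE_count_space ennreal_eq_0_iff intro: antisym)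
    have "H = 0" using Hk 1 by simp
    then have "AE x in count_space UNIV. ennreal (h x) = 0" unfolding H_def
      by (subst (asm) nn_integral_0_iff_AE) auto
    then have hz: "h x = 0" for x using h0[of x] by (auto simp: AE_count_space ennreal_eq_0_iff intro: antisym)
    have pq: "p = q"
    proof (rule pmf_eqI)
      fix x show "pmf p x = pmf q x" using gz[of x] hz[of x] unfolding g_def h_def by simp
    qed
    define J where "J = map_pmf (\<lambda>x. (x, x)) p"
    have "map_pmf fst J = p" "map_pmf snd J = q" unfolding J_def using pq
      by (simp_all add: map_pmf_comp)
    moreover have "measure_pmf.prob J {z. fst z \<noteq> snd z} = 0"
      unfolding J_def measure_map_pmf by simp
    ultimately show ?thesis using dtv_nonneg by (metis order_refl)
  next
    case 2
    define J where "J = pair_pmf p q"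
    have "map_pmf fst J = p" "map_pmf snd J = q" unfolding J_def by (simp_all add: map_fst_pair_pmf map_snd_pair_pmf)
    moreover have "measure_pmf.prob J {z. fst z \<noteq> snd z} \<le> k" using 2 k_def by simp
    ultimately show ?thesis using kd by (intro exI[of _ J]) linarith
  next
    case 3
    define M where "M = embed_pmf (\<lambda>x. m x / s)"
    define Hp where "Hp = embed_pmf (\<lambda>x. h x / k)"
    define Gp where "Gp = embed_pmf (\<lambda>x. g x / k)"
    have pM: "pmf M x = m x / s" for x unfolding M_def
      by (rule embed_norm) (use m0 Ss 3 S_def in auto)
    have pH: "pmf Hp x = h x / k" for x unfolding Hp_def
      by (rule embed_norm) (use h0 Hk 3 H_def in auto)
    have pG: "pmf Gp x = g x / k" for x unfolding Gp_def
      by (rule embed_norm) (use g0 Gk 3 G_def in auto)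
    define J where "J = bind_pmf (bernoulli_pmf s) (\<lambda>c. if c then map_pmf (\<lambda>x. (x, x)) M else pair_pmf Hp Gp)"
    have "map_pmf fst J = p"
    proof (rule pmf_eqI)
      fix x
      have "pmf (map_pmf fst J) x = pmf M x * s + pmf Hp x * (1 - s)"
        unfolding J_def map_bind_pmf pmf_bind using s0 s1
        by (simp add: map_pmf_comp integral_bernoulli_pmf map_fst_pair_pmf map_snd_pair_pmf)
      also have "\<dots> = pmf p x" using 3 unfolding pM pH k_def h_def by simp
      finally show "pmf (map_pmf fst J) x = pmf p x" .
    qed
    moreover have "map_pmf snd J = q"
    proof (rule pmf_eqI)
      fix x
      have "pmf (map_pmf snd J) x = pmf M x * s + pmf Gp x * (1 - s)"
        unfolding J_def map_bind_pmf pmf_bind using s0 s1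
        by (simp add: map_pmf_comp integral_bernoulli_pmf map_fst_pair_pmf map_snd_pair_pmf)
      also have "\<dots> = pmf q x" using 3 unfolding pM pG k_def g_def by simp
      finally show "pmf (map_pmf snd J) x = pmf q x" .
    qed
    moreover have "measure_pmf.prob J {z. fst z \<noteq> snd z} \<le> k"
    proof -
      define f where "f z = (fst z \<noteq> snd z)" for z :: "'a \<times> 'a"
      have "measure_pmf.prob J {z. fst z \<noteq> snd z} = measure_pmf.prob (map_pmf f J) {True}"
        unfolding measure_map_pmf f_def by (intro arg_cong[where f="measure_pmf.prob J"]) auto
      also have "\<dots> = pmf (map_pmf f J) True" by (simp add: measure_pmf_single)
      also have "\<dots> = pmf (map_pmf f (pair_pmf Hp Gp)) True * (1 - s)"
        unfolding J_def map_bind_pmf pmf_bind using s0 s1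
        by (simp add: map_pmf_comp integral_bernoulli_pmf f_def)
      also have "\<dots> \<le> 1 * (1 - s)" using s1 by (intro mult_right_mono pmf_le_1) auto
      finally show ?thesis by (simp add: k_def)
    qed
    ultimately show ?thesis using kd by (intro exI[of _ J]) linarith
  qed
qed


lemma replicate_map_pmf: "replicate_pmf n (map_pmf f p) = map_pmf (map f) (replicate_pmf n p)"
  by (induction n) (simp_all add: map_pmf_def bind_assoc_pmf bind_return_pmf)

lemma U_nth:
  assumes "ys \<noteq> []"
  shows "pmf_of_multiset (mset ys) = map_pmf (nth ys) (pmf_of_set {..<length ys})"
proof -
  have "map_pmf (nth ys) (pmf_of_set {..<length ys}) = pmf_of_multiset (image_mset (nth ys) (mset_set {..<length ys}))"
    using assms by (intro map_pmf_of_set) auto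
  also have "image_mset (nth ys) (mset_set {..<length ys}) = mset ys"
    by (metis mset_set_upto_eq_mset_upto mset_map map_nth)
  finally show ?thesis by simp
qed

lemma tv_lists:
  assumes "length ys = n" "length ys' = n" "n > 0"
  shows "d_TV (add_pmf (pmf_of_multiset (mset ys')) Z) (add_pmf (pmf_of_multiset (mset ys)) Z)
           \<le> card {i. i < n \<and> ys ! i \<noteq> ys' ! i} / n"
proof -
  define P where "P = pair_pmf (pmf_of_set {..<n}) Z"
  define K where "K = map_pmf (\<lambda>(i, z). (ys' ! i + z, ys ! i + z)) P"
  have ne: "ys \<noteq> []" "ys' \<noteq> []" using assms by auto
  have "map_pmf fst K = add_pmf (pmf_of_multiset (mset ys')) Z"
    unfolding K_def P_def add_pmf_def U_nth[OF ne(2)] pair_map_pmf1 map_pmf_comp using assms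
    by (intro map_pmf_cong) auto
  moreover have "map_pmf snd K = add_pmf (pmf_of_multiset (mset ys)) Z"
    unfolding K_def P_def add_pmf_def U_nth[OF ne(1)] pair_map_pmf1 map_pmf_comp using assms
    by (intro map_pmf_cong) auto
  ultimately have "d_TV (add_pmf (pmf_of_multiset (mset ys')) Z) (add_pmf (pmf_of_multiset (mset ys)) Z)
      \<le> measure_pmf.prob K {z. fst z \<noteq> snd z}" by (intro dtv_coupling) auto
  also have "measure_pmf.prob K {z. fst z \<noteq> snd z} = measure_pmf.prob P (fst -` {i. ys ! i \<noteq> ys' ! i})"
    unfolding K_def measure_map_pmf by (intro arg_cong[where f="measure_pmf.prob P"]) auto
  also have "\<dots> = measure_pmf.prob (pmf_of_set {..<n}) {i. ys ! i \<noteq> ys' ! i}"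
    using measure_map_pmf[of fst "pair_pmf (pmf_of_set {..<n}) Z" "{i. ys ! i \<noteq> ys' ! i}"]
    unfolding P_def map_fst_pair_pmf by simp
  also have "\<dots> = card {i. i < n \<and> ys ! i \<noteq> ys' ! i} / n"
    using assms by (subst measure_pmf_of_set) (auto intro!: arg_cong[where f=card])
  finally show ?thesis .
qed


lemma main_step:
  fixes X X' Z :: "int pmf"
  assumes eps: "0 < eps" and d0: "0 < delta" and d1: "delta < 1"
    and KL: "kernel_learnable X Z eps delta T"
    and T0: "real T0 > max (real T) (1 * ln (1 / delta) / eps\<^sup>2)"
  shows "kernel_learnable X' Z (2 * eps + 2 * d_TV X X') (2 * delta) T0"
  unfolding kernel_learnable_def
proof (intro allI impI)
  fix T1 :: nat assume T1: "T0 \<le> T1 \<and> 1 \<le> T1"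
  define \<kappa> where "\<kappa> = d_TV X X'"
  obtain J where J1: "map_pmf fst J = X" and J2: "map_pmf snd J = X'"
    and Jq: "measure_pmf.prob J {z. fst z \<noteq> snd z} \<le> \<kappa>"
    using coupling_exists[of X X'] unfolding \<kappa>_def by blast
  define q where "q = measure_pmf.prob J {z. fst z \<noteq> snd z}"
  define f where "f z = (fst z \<noteq> snd z)" for z :: "int \<times> int"
  define R where "R = replicate_pmf T1 J"
  define U where "U ys = pmf_of_multiset (mset ys)" for ys :: "int list"
  define E where "E = {ys :: int list. d_TV (add_pmf (U ys) Z) X' \<le> 2 * eps + 2 * \<kappa>}"
  define G1 where "G1 = (map fst :: (int \<times> int) list \<Rightarrow> _) -` {ys. d_TV (add_pmf (U ys) Z) X \<le> eps}"
  define B2 where "B2 = map f -` {bs. q + eps \<le> real (length (filter id bs)) / real T1}"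
  have q01: "0 \<le> q" "q \<le> 1" by (auto simp: q_def)
  have n0: "0 < T1" using T1 by auto
  have "real T < real T0" using T0 by simp
  then have TT1: "T \<le> T1" using T1 by linarith
  have PE: "measure_pmf.prob (replicate_pmf T1 X') E = measure_pmf.prob R (map snd -` E)"
    unfolding R_def J2[symmetric] replicate_map_pmf measure_map_pmf ..
  have PG1: "measure_pmf.prob R G1 \<ge> 1 - delta"
  proof -
    have "measure_pmf.prob R G1 = measure_pmf.prob (replicate_pmf T1 X) {ys. d_TV (add_pmf (U ys) Z) X \<le> eps}"
      unfolding R_def G1_def J1[symmetric] replicate_map_pmf measure_map_pmf ..
    then show ?thesis using KL TT1 T1 unfolding kernel_learnable_def U_def by auto
  qed
  have fJ: "map_pmf f J = bernoulli_pmf q"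
  proof (rule pmf_eqI)
    fix b :: bool
    have t: "pmf (map_pmf f J) True = q"
    proof -
      have "pmf (map_pmf f J) True = measure_pmf.prob (map_pmf f J) {True}"
        by (simp add: measure_pmf_single)
      also have "\<dots> = q" unfolding measure_map_pmf q_def f_def
        by (intro arg_cong[where f="measure_pmf.prob J"]) auto
      finally show ?thesis .
    qed
    show "pmf (map_pmf f J) b = pmf (bernoulli_pmf q) b"
      using q01 t by (cases b) (simp_all add: pmf_False_conv_True[of "map_pmf f J"])
  qed
  have PB2: "measure_pmf.prob R B2 \<le> delta"
  proof -
    have "measure_pmf.prob R B2 = measure_pmf.prob (replicate_pmf T1 (bernoulli_pmf q))
             {bs. q + eps \<le> real (length (filter id bs)) / real T1}"
      unfolding R_def B2_def fJ[symmetric] replicate_map_pmf measure_map_pmf ..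
    also have "\<dots> = measure_pmf.prob (binomial_pmf T1 q) {x. q + eps \<le> real x / real T1}"
      using q01 by (simp add: binomial_pmf_altdef measure_map_pmf)
    also have "\<dots> \<le> exp (real_of_int (- 2 * int T1) * eps\<^sup>2)"
      using q01 n0 eps by (intro binomial_distribution.prob_ge') (auto simp: binomial_distribution_def)
    also have "\<dots> \<le> delta"
    proof -
      have "ln (1 / delta) / eps\<^sup>2 < real T1" using T0 T1 by linarith
      then have "ln (1 / delta) < real T1 * eps\<^sup>2" using eps by (simp add: field_simps)
      moreover have "ln (1 / delta) \<ge> 0" using d0 d1 by simp
      ultimately have "real_of_int (- 2 * int T1) * eps\<^sup>2 \<le> ln delta"
      proof -
        have "ln (1 / delta) = - ln delta" using d0 by (simp add: ln_div)
        moreover have "real T1 * eps\<^sup>2 \<ge> 0" by simp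
        moreover have "real_of_int (- 2 * int T1) * eps\<^sup>2 = -2 * (real T1 * eps\<^sup>2)" by simp
        ultimately show ?thesis using \<open>ln (1 / delta) < real T1 * eps\<^sup>2\<close> by linarith
      qed
      then have "exp (real_of_int (- 2 * int T1) * eps\<^sup>2) \<le> exp (ln delta)" by simp
      then show ?thesis using d0 by simp
    qed
    finally show ?thesis .
  qed
  have incl: "AE zs in R. zs \<in> G1 - B2 \<longrightarrow> zs \<in> map snd -` E"
    unfolding AE_measure_pmf_iff
  proof (intro ballI impI)
    fix zs assume zsR: "zs \<in> set_pmf R" and zsG: "zs \<in> G1 - B2"
    have len: "length zs = T1" using zsR unfolding R_def set_replicate_pmf by auto
    define ys where "ys = map fst zs"
    define ys' where "ys' = map snd zs"
    have cnt: "length (filter id (map f zs)) = card {i. i < T1 \<and> ys ! i \<noteq> ys' ! i}"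
      unfolding length_filter_conv_card ys_def ys'_def f_def using len
      by (intro arg_cong[where f=card]) auto
    have c1: "card {i. i < T1 \<and> ys ! i \<noteq> ys' ! i} / real T1 < q + eps"
      using zsG cnt unfolding B2_def by auto
    have g1: "d_TV (add_pmf (U ys) Z) X \<le> eps" using zsG unfolding G1_def ys_def by auto
    have "d_TV (add_pmf (U ys') Z) X' \<le> d_TV (add_pmf (U ys') Z) (add_pmf (U ys) Z) + d_TV (add_pmf (U ys) Z) X'"
      by (rule dtv_tri)
    also have "d_TV (add_pmf (U ys) Z) X' \<le> d_TV (add_pmf (U ys) Z) X + d_TV X X'"
      by (rule dtv_tri)
    also have "d_TV (add_pmf (U ys') Z) (add_pmf (U ys) Z) \<le> card {i. i < T1 \<and> ys ! i \<noteq> ys' ! i} / real T1"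
      unfolding U_def by (rule tv_lists) (use len n0 ys_def ys'_def in auto)
    finally have "d_TV (add_pmf (U ys') Z) X' \<le> 2 * eps + 2 * \<kappa>"
      using c1 g1 Jq unfolding q_def \<kappa>_def by linarith
    then show "zs \<in> map snd -` E" unfolding E_def ys'_def by simp
  qed
  have "1 - delta - delta \<le> measure_pmf.prob R G1 - measure_pmf.prob R B2" using PG1 PB2 by linarith
  also have "\<dots> \<le> measure_pmf.prob R (G1 - B2)"
  proof -
    have "measure_pmf.prob R (G1 - B2) = measure_pmf.prob R G1 - measure_pmf.prob R (G1 \<inter> B2)"
      by (rule measure_pmf.finite_measure_Diff') auto
    moreover have "measure_pmf.prob R (G1 \<inter> B2) \<le> measure_pmf.prob R B2"
      by (rule measure_pmf.finite_measure_mono) auto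
    ultimately show ?thesis by linarith
  qed
  also have "\<dots> \<le> measure_pmf.prob R (map snd -` E)"
    by (rule measure_pmf.finite_measure_mono_AE[OF incl]) auto
  finally show "1 - 2 * delta \<le> measure_pmf.prob (replicate_pmf T1 X')
      {ys. d_TV (add_pmf (pmf_of_multiset (mset ys)) Z) X' \<le> 2 * eps + 2 * d_TV X X'}"
    using PE unfolding E_def U_def \<kappa>_def by linarith
qed


theorem lemma30:
  "\<exists>C::real. C > 0 \<and>
     (\<forall>(X::int pmf) X' Z (eps::real) (delta::real) (T::nat) (T0::nat).
        0 < eps \<longrightarrow> 0 < delta \<longrightarrow> delta < 1 \<longrightarrow>
        kernel_learnable X Z eps delta T \<longrightarrow>
        0 < d_TV X X' \<longrightarrow> d_TV X X' < 1 \<longrightarrow>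
        real T0 > max (real T) (C * ln (1 / delta) / eps\<^sup>2) \<longrightarrow>
        kernel_learnable X' Z (2 * eps + 2 * d_TV X X') (2 * delta) T0)"
proof (intro exI[of _ "1::real"] conjI allI impI)
  fix X X' Z :: "int pmf" and eps delta :: real and T T0 :: nat
  assume "0 < eps" "0 < delta" "delta < 1" "kernel_learnable X Z eps delta T"
    "max (real T) (1 * ln (1 / delta) / eps\<^sup>2) < real T0"
  then show "kernel_learnable X' Z (2 * eps + 2 * d_TV X X') (2 * delta) T0"
    by (rule main_step)
qed simp

end
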